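(* In the setting below, assume $y^*\in\mathcal D$ (a word of length one) and let $V=\sum_{n=0}^{N_1-1}\log|M_{-n}|=\log|B_0|$. Then for every $\delta>0$, $P(V\in\delta\mathbb Z\mid Z_0=y^* )<1$.
   Context: Setting. $(X_n)_{n\in\mathbb Z}$ is a C-chain on a finite alphabet $\mathcal D$: stationary, all finite cylinders have positive probability, the conditional probabilities $P(X_0=i_0\mid X_{-k}=i_k,k\ge1)$ exist as limits of finite-past conditionals, and $\gamma_n=\sup\{|P(X_0=i_0\mid X_{-k}=i_k,k\ge1)/P(X_0=j_0\mid X_{-k}=j_k,k\ge1)-1|:i_k=j_k,k\le n\}$ are finite with $\limsup\frac1n\log\gamma_n<0$. Coefficients are induced: independent pairs $(Q_{n,i},M_{n,i})_{n\in\mathbb Z,i\in\mathcal D}$, i.i.d. in $n$ for fixed $i$, independent of everything else, $Q_n=Q_{n,X_n}$, $M_n=M_{n,X_n}$. Hypotheses: (i) $|Q_0|<q_0$, $m_0^{-1}<|M_0|<m_0$ a.s.; (iii) for every $\delta>0$, $P(\log|M_0|\in\delta\mathbb Z\mid M_0\neq0)<1$, where $\delta\mathbb Z=\{k\delta:k\in\mathbb Z\}$. Markov representation: let $\mathcal S=\bigcup_{n\ge1}\mathcal D^n$ and $\zeta(s_1,\dots,s_n)=s_n$. On an enlarged space there is a stationary irreducible Markov chain $(Y_n)_{n\in\mathbb Z}$ on $\mathcal S$ (independent of the $(Q_{n,i},M_{n,i})$) with $X_n=\zeta(Y_n)$, and constants $r_0\in\mathbb N$ (even), $\delta_0>0$,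 such that from state $(y_1,\dots,y_s)$ the chain moves only to a word of length 1 or to $(y_1,\dots,y_s,x)$; given that it moves to length 1, the new letter has law $P(Y_0=(y)\mid Y_0\in\mathcal D)$; and $P(Y_{n+1}\in\mathcal D\mid Y_n=(y_1,\dots,y_{mr_0}))=\delta_0$ for all $m\in\mathbb N$. Regeneration: $Z_n=Y_{-n}$; fix $y^*\in\mathcal S$ and $r\in(0,1)$; let $(\eta_n)_{n\in\mathbb Z}$ be i.i.d. with $P(\eta_0=1)=r=1-P(\eta_0=0)$, independent of everything else; $N_0=0$, $N_i=\inf\{n>N_{i-1}:Z_n=y^*,\eta_n=1\}$; $B_i=\prod_{n=N_i}^{N_{i+1}-1}M_{-n}$. *)

theory Defs
  imports "HOL-Probability.Probability"
begin

definition lattice :: "real \<Rightarrow> real set" where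
  "lattice d = {of_int k * d | k. True}"

definition cyl :: "'w measure \<Rightarrow> (int \<Rightarrow> 'w \<Rightarrow> 'b) \<Rightarrow> int \<Rightarrow> 'b list \<Rightarrow> 'w set" where
  "cyl P Xp m xs = {\<omega> \<in> space P. \<forall>j<length xs. Xp (m + int j) \<omega> = xs ! j}"

definition fin_cond :: "'w measure \<Rightarrow> (int \<Rightarrow> 'w \<Rightarrow> 'd) \<Rightarrow> (nat \<Rightarrow> 'd) \<Rightarrow> nat \<Rightarrow> real" where
  "fin_cond P Xp i n =
     measure P {\<omega> \<in> space P. \<forall>k\<le>n. Xp (- int k) \<omega> = i k}
   / measure P {\<omega> \<in> space P. \<forall>k\<in>{1..n}. Xp (- int k) \<omega> = i k}"

definition inf_cond :: "'w measure \<Rightarrow> (int \<Rightarrow> 'w \<Rightarrow> 'd) \<Rightarrow> (nat \<Rightarrow> 'd) \<Rightarrow> real" where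
  "inf_cond P Xp i = lim (fin_cond P Xp i)"

definition gamma_set :: "'w measure \<Rightarrow> (int \<Rightarrow> 'w \<Rightarrow> 'd) \<Rightarrow> nat \<Rightarrow> real set" where
  "gamma_set P Xp n = {\<bar>inf_cond P Xp i / inf_cond P Xp j - 1\<bar> | i j. \<forall>k\<le>n. i k = j k}"

definition gamma :: "'w measure \<Rightarrow> (int \<Rightarrow> 'w \<Rightarrow> 'd) \<Rightarrow> nat \<Rightarrow> real" where
  "gamma P Xp n = Sup (gamma_set P Xp n)"

definition ln_ereal :: "real \<Rightarrow> ereal" where
  "ln_ereal x = (if x = 0 then -\<infinity> else ereal (ln x))"

definition C_chain :: "'w measure \<Rightarrow> (int \<Rightarrow> 'w \<Rightarrow> 'd::finite) \<Rightarrow> bool" where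
  "C_chain P Xp \<longleftrightarrow>
     (\<forall>n. Xp n \<in> measurable P (count_space UNIV)) \<and>
     (\<forall>m xs. measure P (cyl P Xp m xs) = measure P (cyl P Xp 0 xs)) \<and>
     (\<forall>m xs. measure P (cyl P Xp m xs) > 0) \<and>
     (\<forall>i. convergent (fin_cond P Xp i)) \<and>
     (\<forall>n. bdd_above (gamma_set P Xp n)) \<and>
     limsup (\<lambda>n. ln_ereal (gamma P Xp n) / ereal (real n)) < 0"

text \<open>Independence of two random variables with possibly different value types
  (same as the library's indep_var, cf. prob_space.indep_var_eq, without requiring equal types).\<close>
definition indep_rv :: "'w measure \<Rightarrow> 'a measure \<Rightarrow> ('w \<Rightarrow> 'a) \<Rightarrow> 'b measure \<Rightarrow> ('w \<Rightarrow> 'b) \<Rightarrow> bool" where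
  "indep_rv P Ma A Mb B \<longleftrightarrow>
     A \<in> measurable P Ma \<and> B \<in> measurable P Mb \<and>
     prob_space.indep_set P
       (sigma_sets (space P) {A -` S \<inter> space P | S. S \<in> sets Ma})
       (sigma_sets (space P) {B -` S \<inter> space P | S. S \<in> sets Mb})"

text \<open>First regeneration time N_1 = inf{n > 0 : Z_n = y*, eta_n = 1}, with Z_n = Y_{-n}.\<close>
definition regen1 :: "(int \<Rightarrow> 'w \<Rightarrow> 'd list) \<Rightarrow> (int \<Rightarrow> 'w \<Rightarrow> bool) \<Rightarrow> 'd list \<Rightarrow> 'w \<Rightarrow> nat" where
  "regen1 Y eta ystar \<omega> = (LEAST n. n > 0 \<and> Y (- int n) \<omega> = ystar \<and> eta (int n) \<omega>)"

text \<open>V = sum_{n=0}^{N_1-1} log |M_{-n}|, where M_n = Mc n (X_n).\<close>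
definition Vsum :: "(int \<Rightarrow> 'd \<Rightarrow> 'w \<Rightarrow> real) \<Rightarrow> (int \<Rightarrow> 'w \<Rightarrow> 'd) \<Rightarrow> (int \<Rightarrow> 'w \<Rightarrow> 'd list)
    \<Rightarrow> (int \<Rightarrow> 'w \<Rightarrow> bool) \<Rightarrow> 'd list \<Rightarrow> 'w \<Rightarrow> real" where
  "Vsum Mc X Y eta ystar \<omega> =
     (\<Sum>n<regen1 Y eta ystar \<omega>. ln \<bar>Mc (- int n) (X (- int n) \<omega>) \<omega>\<bar>)"

end

theory Submission
  imports Defs
begin


lemma lattice_iff: "x \<in> lattice d \<longleftrightarrow> (\<exists>k::int. x = of_int k * d)"
  unfolding lattice_def by blast

lemma lattice_add: "x \<in> lattice d \<Longrightarrow> y \<in> lattice d \<Longrightarrow> x + y \<in> lattice d"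
proof -
  assume "x \<in> lattice d" "y \<in> lattice d"
  then obtain k l :: int where "x = of_int k * d" "y = of_int l * d" unfolding lattice_iff by blast
  then have "x + y = of_int (k + l) * d" by (simp add: distrib_right)
  then show ?thesis unfolding lattice_iff by blast
qed

lemma lattice_uminus: "x \<in> lattice d \<Longrightarrow> - x \<in> lattice d"
proof -
  assume "x \<in> lattice d"
  then obtain k :: int where "x = of_int k * d" unfolding lattice_iff by blast
  then have "- x = of_int (- k) * d" by simp
  then show ?thesis unfolding lattice_iff by blast
qed

lemma lattice_diff: "x \<in> lattice d \<Longrightarrow> y \<in> lattice d \<Longrightarrow> x - y \<in> lattice d"
  using lattice_add[of x d "-y"] lattice_uminus[of y d] by simp

lemma lattice_zero: "0 \<in> lattice d"
  unfolding lattice_iff by (rule exI[of _ 0]) simp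

lemma lattice_mult_int: "x \<in> lattice d \<Longrightarrow> of_int m * x \<in> lattice d"
proof -
  assume "x \<in> lattice d"
  then obtain k :: int where "x = of_int k * d" unfolding lattice_iff by blast
  then have "of_int m * x = of_int (m * k) * d" by simp
  then show ?thesis unfolding lattice_iff by blast
qed

lemma lattice_sum: "finite A \<Longrightarrow> (\<And>i. i \<in> A \<Longrightarrow> f i \<in> lattice d) \<Longrightarrow> (\<Sum>i\<in>A. f i) \<in> lattice d"
  by (induction A rule: finite_induct) (auto intro: lattice_add lattice_zero)

lemma lattice_div: assumes "of_nat K * x \<in> lattice d" "K > 0" shows "x \<in> lattice (d / of_nat K)"
proof -
  from assms obtain k :: int where "of_nat K * x = of_int k * d" by (auto simp: lattice_iff)
  then have "x = of_int k * (d / of_nat K)" using assms(2) by (simp add: field_simps)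
  then show ?thesis by (auto simp: lattice_iff)
qed

lemma lattice_borel: "lattice d \<in> sets borel"
proof -
  have "lattice d = range (\<lambda>k::int. of_int k * d)" by (auto simp: lattice_def)
  then have "countable (lattice d)" by simp
  then show ?thesis by (rule sets.countable[rotated]) auto
qed

lemma (in prob_space) AE_ex: assumes "AE x in M. P x" shows "\<exists>x\<in>space M. P x"
proof (rule ccontr)
  assume nex: "\<not> (\<exists>x\<in>space M. P x)"
  have "AE x in M. False" using assms AE_space
  proof eventually_elim
    case (elim x)
    then show False using nex by blast
  qed
  then show False by simp
qed

lemma (in prob_space) coset_const:
  fixes U W :: "'a \<Rightarrow> real"
  assumes ind: "indep_var borel U borel W" and d: "d > 0"
    and ae: "AE \<omega> in M. U \<omega> + W \<omega> \<in> lattice d"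
  shows "\<exists>t. AE \<omega> in M. U \<omega> - t \<in> lattice d"
proof -
  define \<phi> where "\<phi> x = x - d * of_int \<lfloor>x / d\<rfloor>" for x
  have [measurable]: "U \<in> borel_measurable M" "W \<in> borel_measurable M"
    using indep_var_rv1[OF ind] indep_var_rv2[OF ind] by auto
  have [measurable]: "\<phi> \<in> borel_measurable borel" unfolding \<phi>_def by measurable
  have key: "\<phi> x = \<phi> (- y)" if xy: "x + y \<in> lattice d" for x y
  proof -
    obtain k :: int where k: "x + y = of_int k * d" using xy by (auto simp: lattice_iff)
    then have "-y = x - of_int k * d" by simp
    moreover have "(x - of_int k * d) / d = x / d - of_int k" using d by (simp add: field_simps)
    ultimately have "\<lfloor>(-y) / d\<rfloor> = \<lfloor>x/d\<rfloor> - k" by simp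
    then have fl: "real_of_int \<lfloor>(-y) / d\<rfloor> = real_of_int \<lfloor>x/d\<rfloor> - real_of_int k" by simp
    have "\<phi> (-y) = -y - d * (real_of_int \<lfloor>x/d\<rfloor> - real_of_int k)" unfolding \<phi>_def fl ..
    also have "\<dots> = \<phi> x" unfolding \<phi>_def using k by (simp add: algebra_simps)
    finally show ?thesis by simp
  qed
  have ae2: "AE \<omega> in M. \<phi> (U \<omega>) = \<phi> (- W \<omega>)" using ae by eventually_elim (rule key)
  define F where "F q = \<P>(\<omega> in M. \<phi> (U \<omega>) \<le> q)" for q
  have F01: "F q = 0 \<or> F q = 1" for q
  proof -
    have i1: "prob ((\<lambda>x. (U x, W x)) -` ({x. \<phi> x \<le> q} \<times> {y. \<phi> (-y) \<le> q}) \<inter> space M) =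
        prob (U -` {x. \<phi> x \<le> q} \<inter> space M) * prob (W -` {y. \<phi> (-y) \<le> q} \<inter> space M)"
      by (rule indep_varD[OF ind]) measurable
    have i2: "(\<lambda>x. (U x, W x)) -` ({x. \<phi> x \<le> q} \<times> {y. \<phi> (-y) \<le> q}) \<inter> space M
        = {\<omega>\<in>space M. \<phi> (U \<omega>) \<le> q \<and> \<phi> (- W \<omega>) \<le> q}" by auto
    have i3: "\<P>(\<omega> in M. \<phi> (U \<omega>) \<le> q \<and> \<phi> (- W \<omega>) \<le> q) = F q"
      unfolding F_def
    proof (rule prob_eq_AE)
      show "AE x in M. (\<phi> (U x) \<le> q \<and> \<phi> (- W x) \<le> q) = (\<phi> (U x) \<le> q)"
        using ae2 by eventually_elim simp
    qed measurable
    have i4: "U -` {x. \<phi> x \<le> q} \<inter> space M = {\<omega>\<in>space M. \<phi> (U \<omega>) \<le> q}" by auto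
    have i5: "W -` {y. \<phi> (-y) \<le> q} \<inter> space M = {\<omega>\<in>space M. \<phi> (- W \<omega>) \<le> q}" by auto
    have i6: "\<P>(\<omega> in M. \<phi> (- W \<omega>) \<le> q) = F q"
      unfolding F_def
    proof (rule prob_eq_AE)
      show "AE x in M. (\<phi> (- W x) \<le> q) = (\<phi> (U x) \<le> q)"
        using ae2 by eventually_elim simp
    qed measurable
    have i7: "prob {\<omega>\<in>space M. \<phi> (U \<omega>) \<le> q} = F q" by (simp add: F_def)
    have "F q = F q * F q"
      using i1 unfolding i2 i3 i4 i5 i6 i7 .
    moreover have sq: "F q * (1 - F q) = F q - F q * F q" by (simp add: right_diff_distrib)
    ultimately have "F q * (1 - F q) = 0" by linarith
    then show ?thesis by simp
  qed
  have "AE \<omega> in M. \<forall>q::rat. \<phi> (U \<omega>) \<le> of_rat q \<longleftrightarrow> F (of_rat q) = 1"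
  proof (subst AE_all_countable, intro allI)
    fix q :: rat
    have meas: "{\<omega>\<in>space M. \<phi> (U \<omega>) \<le> of_rat q} \<in> events" by measurable
    show "AE \<omega> in M. \<phi> (U \<omega>) \<le> of_rat q \<longleftrightarrow> F (of_rat q) = 1"
    proof (cases "F (of_rat q) = 1")
      case True
      then have "AE \<omega> in M. \<phi> (U \<omega>) \<le> of_rat q"
        unfolding F_def prob_Collect_eq_1[OF meas] .
      then show ?thesis by eventually_elim (simp add: True)
    next
      case False
      then have "F (of_rat q) = 0" using F01 by blast
      then have "AE \<omega> in M. \<not> \<phi> (U \<omega>) \<le> of_rat q"
        unfolding F_def prob_Collect_eq_0[OF meas] .
      then show ?thesis by eventually_elim (simp add: False)
    qed
  qed
  from AE_ex[OF this] obtain \<omega>0 where \<omega>0: "\<forall>q::rat. \<phi> (U \<omega>0) \<le> of_rat q \<longleftrightarrow> F (of_rat q) = 1"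
    by blast
  define t where "t = \<phi> (U \<omega>0)"
  have "AE \<omega> in M. \<phi> (U \<omega>) = t"
    using \<open>AE \<omega> in M. \<forall>q::rat. _\<close>
  proof (eventually_elim)
    case (elim \<omega>)
    show ?case
    proof (rule ccontr)
      assume ne: "\<phi> (U \<omega>) \<noteq> t"
      show False
      proof (cases "\<phi> (U \<omega>) < t")
        case True
        then obtain q where q1: "\<phi> (U \<omega>) < of_rat q" and q2: "of_rat q < t" using of_rat_dense by blast
        have e1: "\<phi> (U \<omega>) \<le> of_rat q \<longleftrightarrow> F (of_rat q) = 1" using elim by blast
        have e2: "\<phi> (U \<omega>0) \<le> of_rat q \<longleftrightarrow> F (of_rat q) = 1" using \<omega>0 by blast
        have "F (of_rat q) = 1" using e1 q1 by simp
        then have "t \<le> of_rat q" using e2 unfolding t_def by simp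
        then show False using q2 by simp
      next
        case False
        then have "t < \<phi> (U \<omega>)" using ne by simp
        then obtain q where q1: "t < of_rat q" and q2: "of_rat q < \<phi> (U \<omega>)" using of_rat_dense by blast
        have e1: "\<phi> (U \<omega>) \<le> of_rat q \<longleftrightarrow> F (of_rat q) = 1" using elim by blast
        have e2: "\<phi> (U \<omega>0) \<le> of_rat q \<longleftrightarrow> F (of_rat q) = 1" using \<omega>0 by blast
        have "F (of_rat q) \<noteq> 1" using e1 q2 by simp
        then have "\<not> t \<le> of_rat q" using e2 unfolding t_def by simp
        then show False using q1 by simp
      qed
    qed
  qed
  then have "AE \<omega> in M. U \<omega> - t \<in> lattice d"
  proof eventually_elim
    case (elim \<omega>)
    have h1: "U \<omega> - t = d * of_int \<lfloor>U \<omega> / d\<rfloor>" using elim unfolding \<phi>_def by linarith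
    then have "U \<omega> - t = of_int \<lfloor>U \<omega> / d\<rfloor> * d" by (simp only: mult.commute)
    then show ?case unfolding lattice_iff by (rule exI)
  qed
  then show ?thesis by blast
qed



lemma cyl_pos:
  fixes P :: "'w measure" and Y :: "int \<Rightarrow> 'w \<Rightarrow> 'b"
  assumes mk: "\<And>xs x y. measure P (cyl P Y n (xs @ [x, y])) = measure P (cyl P Y n (xs @ [x])) * p x y"
  shows "l \<noteq> [] \<Longrightarrow> measure P (cyl P Y n [hd l]) > 0 \<Longrightarrow>
    (\<And>j. Suc j < length l \<Longrightarrow> p (l!j) (l!Suc j) > 0) \<Longrightarrow> measure P (cyl P Y n l) > 0"
proof (induction l rule: rev_induct)
  case Nil then show ?case by simp
next
  case (snoc y xs)
  show ?case
  proof (cases "xs = []")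
    case True then show ?thesis using snoc.prems by simp
  next
    case False
    then obtain xs' x where xs: "xs = xs' @ [x]" by (cases xs rule: rev_cases) auto
    have IH: "measure P (cyl P Y n xs) > 0"
    proof (rule snoc.IH[OF False])
      show "measure P (cyl P Y n [hd xs]) > 0" using snoc.prems(2) False by simp
    next
      fix j assume "Suc j < length xs"
      then show "p (xs!j) (xs!Suc j) > 0" using snoc.prems(3)[of j] by (simp add: nth_append)
    qed
    have "p x y > 0" using snoc.prems(3)[of "length xs'"] xs by (simp add: nth_append)
    moreover have "measure P (cyl P Y n (xs @ [y])) = measure P (cyl P Y n xs) * p x y"
      using mk[of xs' x y] xs by simp
    ultimately show ?thesis using IH by simp
  qed
qed

lemma reach_nonempty:
  assumes moves: "\<And>x y. x \<noteq> [] \<Longrightarrow> p x y > 0 \<Longrightarrow> length y = 1 \<or> (\<exists>c. y = x @ [c])"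
  shows "(x, y) \<in> {(a, b). p a b > 0}\<^sup>* \<Longrightarrow> x \<noteq> [] \<Longrightarrow> y \<noteq> []"
proof (induction rule: rtrancl_induct)
  case base then show ?case by simp
next
  case (step y z)
  then have "p y z > 0" "y \<noteq> []" by auto
  then have "length z = 1 \<or> (\<exists>c. z = y @ [c])" using moves by blast
  then show ?case by auto
qed

lemma ext_pos:
  fixes p :: "'d list \<Rightarrow> 'd list \<Rightarrow> real"
  assumes moves: "\<And>x y. x \<noteq> [] \<Longrightarrow> p x y > 0 \<Longrightarrow> length y = 1 \<or> (\<exists>c. y = x @ [c])"
    and irred: "\<And>x y. x \<noteq> [] \<Longrightarrow> y \<noteq> [] \<Longrightarrow> (x, y) \<in> {(a, b). p a b > 0}\<^sup>*"
    and w: "w \<noteq> []"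
  shows "p w (w @ [c]) > 0"
proof -
  have "(w @ [c] @ [c], w @ [c]) \<in> {(a, b). p a b > 0}\<^sup>*" using irred by simp
  then show ?thesis
  proof (cases rule: rtranclE)
    case base then show ?thesis by simp
  next
    case (step z)
    have z: "z \<noteq> []" using reach_nonempty[of p, OF moves, of "w @ [c] @ [c]" z] step(1) by simp
    have pz: "p z (w @ [c]) > 0" using step by simp
    then have "length (w @ [c]) = 1 \<or> (\<exists>c'. w @ [c] = z @ [c'])" using moves z by blast
    then have "w = z" using w by auto
    then show ?thesis using pz by simp
  qed
qed

theorem lemma4p2:
  fixes P :: "'w measure"
    and X :: "int \<Rightarrow> 'w \<Rightarrow> 'd::finite"
    and Y :: "int \<Rightarrow> 'w \<Rightarrow> 'd list"
    and Qc Mc :: "int \<Rightarrow> 'd \<Rightarrow> 'w \<Rightarrow> real"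
    and eta :: "int \<Rightarrow> 'w \<Rightarrow> bool"
    and p :: "'d list \<Rightarrow> 'd list \<Rightarrow> real"
    and q0 m0 r delta0 :: real
    and r0 :: nat
    and ystar :: "'d list"
  assumes P: "prob_space P"
    and Cchain: "C_chain P X"
    \<comment> \<open>coefficients: independent pairs, i.i.d. in n for fixed i\<close>
    and coef_indep: "prob_space.indep_vars P (\<lambda>_. borel \<Otimes>\<^sub>M borel)
          (\<lambda>(n, i) \<omega>. (Qc n i \<omega>, Mc n i \<omega>)) UNIV"
    and coef_ident: "\<And>n i. distr P (borel \<Otimes>\<^sub>M borel) (\<lambda>\<omega>. (Qc n i \<omega>, Mc n i \<omega>))
                         = distr P (borel \<Otimes>\<^sub>M borel) (\<lambda>\<omega>. (Qc 0 i \<omega>, Mc 0 i \<omega>))"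
    \<comment> \<open>hypothesis (i)\<close>
    and hyp_i: "AE \<omega> in P. \<bar>Qc 0 (X 0 \<omega>) \<omega>\<bar> < q0 \<and>
                   inverse m0 < \<bar>Mc 0 (X 0 \<omega>) \<omega>\<bar> \<and> \<bar>Mc 0 (X 0 \<omega>) \<omega>\<bar> < m0"
    \<comment> \<open>hypothesis (iii)\<close>
    and hyp_iii: "\<And>\<delta>. \<delta> > 0 \<Longrightarrow>
          \<P>(\<omega> in P. ln \<bar>Mc 0 (X 0 \<omega>) \<omega>\<bar> \<in> lattice \<delta> \<bar> Mc 0 (X 0 \<omega>) \<omega> \<noteq> 0) < 1"
    \<comment> \<open>Markov representation\<close>
    and Y_S: "\<And>n \<omega>. \<omega> \<in> space P \<Longrightarrow> Y n \<omega> \<noteq> []"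
    and X_Y: "\<And>n \<omega>. \<omega> \<in> space P \<Longrightarrow> X n \<omega> = last (Y n \<omega>)"
    and Y_stat: "\<And>m ys. measure P (cyl P Y m ys) = measure P (cyl P Y 0 ys)"
    and Y_markov: "\<And>n xs x y. measure P (cyl P Y n (xs @ [x, y]))
                                = measure P (cyl P Y n (xs @ [x])) * p x y"
    and Y_irred: "\<And>x y. x \<noteq> [] \<Longrightarrow> y \<noteq> [] \<Longrightarrow> (x, y) \<in> {(a, b). p a b > 0}\<^sup>*"
    and r0: "r0 > 0" "even r0"
    and delta0: "delta0 > 0"
    and Y_moves: "\<And>x y. x \<noteq> [] \<Longrightarrow> p x y > 0 \<Longrightarrow> length y = 1 \<or> (\<exists>c. y = x @ [c])"
    and Y_restart: "\<And>x b. x \<noteq> [] \<Longrightarrow>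
          p x [b] * \<P>(\<omega> in P. length (Y 0 \<omega>) = 1)
            = (\<Sum>c\<in>UNIV. p x [c]) * \<P>(\<omega> in P. Y 0 \<omega> = [b])"
    and Y_delta0: "\<And>x. x \<noteq> [] \<Longrightarrow> r0 dvd length x \<Longrightarrow> (\<Sum>c\<in>UNIV. p x [c]) = delta0"
    \<comment> \<open>independence: coefficients, the chain Y and the thinning variables eta\<close>
    and indep_coef: "indep_rv P
          (Pi\<^sub>M UNIV (\<lambda>_. borel \<Otimes>\<^sub>M borel)) (\<lambda>\<omega> (n, i). (Qc n i \<omega>, Mc n i \<omega>))
          ((Pi\<^sub>M UNIV (\<lambda>_. count_space UNIV)) \<Otimes>\<^sub>M (Pi\<^sub>M UNIV (\<lambda>_. count_space UNIV)))
          (\<lambda>\<omega>. (\<lambda>n. Y n \<omega>, \<lambda>n. eta n \<omega>))"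
    and indep_Y_eta: "indep_rv P
          (Pi\<^sub>M UNIV (\<lambda>_. count_space UNIV)) (\<lambda>\<omega> n. Y n \<omega>)
          (Pi\<^sub>M UNIV (\<lambda>_. count_space UNIV)) (\<lambda>\<omega> n. eta n \<omega>)"
    \<comment> \<open>regeneration: eta i.i.d. Bernoulli(r)\<close>
    and r: "0 < r" "r < 1"
    and eta_indep: "prob_space.indep_vars P (\<lambda>_. count_space UNIV) eta UNIV"
    and eta_law: "\<And>n. \<P>(\<omega> in P. eta n \<omega>) = r"
    and ystar: "length ystar = 1"
  shows "\<forall>\<delta>>0. \<P>(\<omega> in P. Vsum Mc X Y eta ystar \<omega> \<in> lattice \<delta> \<bar> Y 0 \<omega> = ystar) < 1"
proof (intro allI impI)
  fix \<delta> :: real assume \<delta>: "\<delta> > 0"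
  interpret prob_space P by (rule P)
  define L where "L n i \<omega> = ln \<bar>Mc n i \<omega>\<bar>" for n i \<omega>
  have [measurable]: "lattice d \<in> sets borel" for d by (rule lattice_borel)
  have CM[measurable]: "(\<lambda>\<omega> (n, i). (Qc n i \<omega>, Mc n i \<omega>)) \<in> measurable P (Pi\<^sub>M UNIV (\<lambda>_. borel \<Otimes>\<^sub>M borel))"
    using indep_coef unfolding indep_rv_def by blast
  have DY[measurable]: "(\<lambda>\<omega>. (\<lambda>n. Y n \<omega>, \<lambda>n. eta n \<omega>)) \<in> measurable P
      ((Pi\<^sub>M UNIV (\<lambda>_. count_space UNIV)) \<Otimes>\<^sub>M (Pi\<^sub>M UNIV (\<lambda>_. count_space UNIV)))"
    using indep_coef unfolding indep_rv_def by blast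
  have YY[measurable]: "(\<lambda>\<omega> n. Y n \<omega>) \<in> measurable P (Pi\<^sub>M UNIV (\<lambda>_. count_space UNIV))"
    using indep_Y_eta unfolding indep_rv_def by blast
  have EE[measurable]: "(\<lambda>\<omega> n. eta n \<omega>) \<in> measurable P (Pi\<^sub>M UNIV (\<lambda>_. count_space UNIV))"
    using indep_Y_eta unfolding indep_rv_def by blast
  have Ymeas[measurable]: "Y n \<in> measurable P (count_space UNIV)" for n
    using measurable_compose[OF YY measurable_component_singleton[of n UNIV]] by simp
  have etameas[measurable]: "eta n \<in> measurable P (count_space UNIV)" for n
    using measurable_compose[OF EE measurable_component_singleton[of n UNIV]] by simp
  have QMmeas[measurable]: "(\<lambda>\<omega>. (Qc n i \<omega>, Mc n i \<omega>)) \<in> measurable P (borel \<Otimes>\<^sub>M borel)" for n i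
    using measurable_compose[OF CM measurable_component_singleton[of "(n, i)" UNIV]] by simp
  have Mmeas[measurable]: "Mc n i \<in> borel_measurable P" for n i
    using measurable_compose[OF QMmeas measurable_snd] by simp
  have Lmeas[measurable]: "L n i \<in> borel_measurable P" for n i
    unfolding L_def[abs_def] by measurable
  have X0meas[measurable]: "X 0 \<in> measurable P (count_space UNIV)"
    using Cchain unfolding C_chain_def by blast
  obtain a where ys: "ystar = [a]" using ystar by (cases ystar) auto
  define E0 where "E0 = {\<omega>\<in>space P. Y 0 \<omega> = ystar}"
  have E0ev: "E0 \<in> events" unfolding E0_def by measurable
  define V where "V = Vsum Mc X Y eta ystar"
  show "\<P>(\<omega> in P. Vsum Mc X Y eta ystar \<omega> \<in> lattice \<delta> \<bar> Y 0 \<omega> = ystar) < 1"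
  proof (cases "prob E0 = 0")
    case True then show ?thesis unfolding cond_prob_def E0_def by simp
  next
    case False
    then have E0pos: "prob E0 > 0" using measure_nonneg[of P E0] by linarith
    show ?thesis
    proof (rule ccontr)
      assume contra: "\<not> \<P>(\<omega> in P. Vsum Mc X Y eta ystar \<omega> \<in> lattice \<delta> \<bar> Y 0 \<omega> = ystar) < 1"
      define A where "A = {\<omega>\<in>space P. V \<omega> \<in> lattice \<delta> \<and> Y 0 \<omega> = ystar}"
      have AE0: "prob A \<ge> prob E0"
      proof -
        have "\<P>(\<omega> in P. Vsum Mc X Y eta ystar \<omega> \<in> lattice \<delta> \<bar> Y 0 \<omega> = ystar) = prob A / prob E0"
          unfolding cond_prob_def A_def E0_def V_def  by simp
        then show ?thesis using contra E0pos by (simp add: divide_less_eq)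
      qed
      have F0: "prob F = 0" if Fev: "F \<in> events" and FE: "F \<subseteq> E0" and FV: "\<And>\<omega>. \<omega> \<in> F \<Longrightarrow> V \<omega> \<notin> lattice \<delta>" for F
      proof (cases "A \<in> events")
        case False
        then have "prob A = 0" by (simp add: measure_notin_sets)
        then show ?thesis using AE0 E0pos by simp
      next
        case True
        have "A \<inter> F = {}" using FV unfolding A_def by blast
        then have "prob (A \<union> F) = prob A + prob F" using True Fev by (simp add: finite_measure_Union)
        moreover have "A \<union> F \<subseteq> E0" using FE unfolding A_def E0_def by blast
        then have "prob (A \<union> F) \<le> prob E0" using E0ev by (intro finite_measure_mono) auto
        ultimately show ?thesis using AE0 measure_nonneg[of P F] by linarith
      qed
      have r0ge2: "r0 \<ge> 2"
      proof -
        have "r0 \<noteq> 1" using r0(2) by auto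
        then show ?thesis using r0(1) by linarith
      qed
      have restart: "p x [a] > 0" if x: "x \<noteq> []" "r0 dvd length x" for x
      proof -
        have eq: "p x [a] * \<P>(\<omega> in P. length (Y 0 \<omega>) = 1) = delta0 * prob E0"
          using Y_restart[OF x(1), of a] Y_delta0[OF x] unfolding E0_def ys by simp
        have pos: "delta0 * prob E0 > 0" using delta0 E0pos by simp
        have nn: "\<P>(\<omega> in P. length (Y 0 \<omega>) = 1) \<ge> 0" by simp
        show ?thesis
        proof (rule ccontr)
          assume "\<not> 0 < p x [a]"
          then have "p x [a] * \<P>(\<omega> in P. length (Y 0 \<omega>) = 1) \<le> 0"
            using nn by (simp add: mult_nonpos_nonneg)
          then show False using eq pos by linarith
        qed
      qed
      have ext: "p w (w @ [c]) > 0" if "w \<noteq> []" for w c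
        using ext_pos[of p, OF Y_moves Y_irred that] .
      define lt where "lt b n = (if n = 0 then a else b)" for b :: 'd and n :: nat
      define S where "S b \<omega> = (\<Sum>n<r0. L (- int n) (lt b n) \<omega>)" for b \<omega>
      define ws where "ws b = map (\<lambda>j. a # replicate j b) [0..<r0] @ [[a]]" for b
      have ws_len: "length (ws b) = Suc r0" for b unfolding ws_def by simp
      have ws_lt: "ws b ! j = a # replicate j b" if "j < r0" for b j
        unfolding ws_def using that by (simp add: nth_append)
      have ws_r0: "ws b ! r0 = [a]" for b unfolding ws_def by (simp add: nth_append)
      have Smeas[measurable]: "S b \<in> borel_measurable P" for b unfolding S_def[abs_def] by measurable
      have AES: "AE \<omega> in P. S b \<omega> \<in> lattice \<delta>" for b
      proof -
        define Path where "Path = cyl P Y (- int r0) (ws b)"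
        have Path_eq: "Path = {\<omega>\<in>space P. \<forall>j<Suc r0. Y (- int r0 + int j) \<omega> = ws b ! j}"
          unfolding Path_def cyl_def ws_len ..
        have Pathev: "Path \<in> events" unfolding Path_eq by measurable
        have Pathpos: "prob Path > 0"
          unfolding Path_def
        proof (rule cyl_pos[where p=p, OF Y_markov])
          show "ws b \<noteq> []" unfolding ws_def by simp
          have "hd (ws b) = ws b ! 0" by (rule hd_conv_nth) (simp add: ws_def)
          also have "\<dots> = [a]" using ws_lt[of 0 b] r0(1) by simp
          finally have hd: "hd (ws b) = [a]" .
          have "cyl P Y 0 [[a]] = E0" unfolding cyl_def E0_def ys by auto
          then show "prob (cyl P Y (- int r0) [hd (ws b)]) > 0"
            unfolding hd using Y_stat[of "- int r0" "[[a]]"] E0pos by simp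
        next
          fix j assume j: "Suc j < length (ws b)"
          show "p (ws b ! j) (ws b ! Suc j) > 0"
          proof (cases "Suc j < r0")
            case True
            have "ws b ! Suc j = (a # replicate j b) @ [b]"
              using ws_lt[OF True] by (simp add: replicate_append_same)
            then show ?thesis using ws_lt[of j b] True ext[of "a # replicate j b" b] by simp
          next
            case False
            then have jr: "Suc j = r0" using j ws_len by simp
            then have "ws b ! Suc j = [a]" using ws_r0 by simp
            moreover have "ws b ! j = a # replicate j b" using ws_lt[of j b] jr by simp
            moreover have "p (a # replicate j b) [a] > 0" using restart[of "a # replicate j b"] jr by simp
            ultimately show ?thesis by simp
          qed
        qed
        define H where "H = Path \<inter> {\<omega>\<in>space P. eta (int r0) \<omega>}"
        define G where "G = {\<omega>\<in>space P. S b \<omega> \<notin> lattice \<delta>}"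
        have Gev: "G \<in> events" unfolding G_def by measurable
        have etaev: "{\<omega>\<in>space P. eta (int r0) \<omega>} \<in> events" by measurable
        have Hev: "H \<in> events" unfolding H_def using Pathev etaev by blast
        have probH: "prob H = prob Path * r"
        proof -
          have iset: "indep_set
              (sigma_sets (space P) {(\<lambda>\<omega> n. Y n \<omega>) -` S \<inter> space P | S. S \<in> sets (Pi\<^sub>M UNIV (\<lambda>_. count_space UNIV))})
              (sigma_sets (space P) {(\<lambda>\<omega> n. eta n \<omega>) -` S \<inter> space P | S. S \<in> sets (Pi\<^sub>M UNIV (\<lambda>_. count_space UNIV))})"
            using indep_Y_eta unfolding indep_rv_def by blast
          have s1: "Path \<in> sigma_sets (space P) {(\<lambda>\<omega> n. Y n \<omega>) -` S \<inter> space P | S. S \<in> sets (Pi\<^sub>M UNIV (\<lambda>_. count_space UNIV))}"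
          proof (rule sigma_sets.Basic, intro CollectI exI conjI)
            show "Path = (\<lambda>\<omega> n. Y n \<omega>) -` {f \<in> space (Pi\<^sub>M UNIV (\<lambda>_. count_space UNIV)). \<forall>j<Suc r0. f (- int r0 + int j) = ws b ! j} \<inter> space P"
              unfolding Path_eq by (auto simp: space_PiM)
            show "{f \<in> space (Pi\<^sub>M UNIV (\<lambda>_. count_space UNIV)). \<forall>j<Suc r0. f (- int r0 + int j) = ws b ! j} \<in> sets (Pi\<^sub>M UNIV (\<lambda>_. count_space UNIV))"
              by measurable
          qed
          have s2: "{\<omega>\<in>space P. eta (int r0) \<omega>} \<in> sigma_sets (space P) {(\<lambda>\<omega> n. eta n \<omega>) -` S \<inter> space P | S. S \<in> sets (Pi\<^sub>M UNIV (\<lambda>_. count_space UNIV))}"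
          proof (rule sigma_sets.Basic, intro CollectI exI conjI)
            show "{\<omega>\<in>space P. eta (int r0) \<omega>} = (\<lambda>\<omega> n. eta n \<omega>) -` {f \<in> space (Pi\<^sub>M UNIV (\<lambda>_. count_space UNIV)). f (int r0)} \<inter> space P"
              by (auto simp: space_PiM)
            show "{f \<in> space (Pi\<^sub>M UNIV (\<lambda>_. count_space UNIV)). f (int r0)} \<in> sets (Pi\<^sub>M UNIV (\<lambda>_. count_space UNIV))"
              by measurable
          qed
          have "prob H = prob Path * prob {\<omega>\<in>space P. eta (int r0) \<omega>}"
            unfolding H_def by (rule indep_setD[OF iset s1 s2])
          then show ?thesis using eta_law[of "int r0"] by simp
        qed
        have probGH: "prob (G \<inter> H) = prob G * prob H"
        proof -
          have iset: "indep_set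
              (sigma_sets (space P) {(\<lambda>\<omega> (n, i). (Qc n i \<omega>, Mc n i \<omega>)) -` S \<inter> space P | S. S \<in> sets (Pi\<^sub>M UNIV (\<lambda>_. borel \<Otimes>\<^sub>M borel))})
              (sigma_sets (space P) {(\<lambda>\<omega>. (\<lambda>n. Y n \<omega>, \<lambda>n. eta n \<omega>)) -` S \<inter> space P | S. S \<in>
                 sets ((Pi\<^sub>M UNIV (\<lambda>_. count_space UNIV)) \<Otimes>\<^sub>M (Pi\<^sub>M UNIV (\<lambda>_. count_space UNIV)))})"
            using indep_coef unfolding indep_rv_def by blast
          have s1: "G \<in> sigma_sets (space P) {(\<lambda>\<omega> (n, i). (Qc n i \<omega>, Mc n i \<omega>)) -` S \<inter> space P | S. S \<in> sets (Pi\<^sub>M UNIV (\<lambda>_. borel \<Otimes>\<^sub>M borel))}"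
          proof (rule sigma_sets.Basic, intro CollectI exI conjI)
            show "G = (\<lambda>\<omega> (n, i). (Qc n i \<omega>, Mc n i \<omega>)) -` {f \<in> space (Pi\<^sub>M UNIV (\<lambda>_. borel \<Otimes>\<^sub>M borel)).
                (\<Sum>n<r0. ln \<bar>snd (f (- int n, lt b n))\<bar>) \<notin> lattice \<delta>} \<inter> space P"
              unfolding G_def S_def L_def by (auto simp: space_PiM space_pair_measure)
            show "{f \<in> space (Pi\<^sub>M UNIV (\<lambda>_. borel \<Otimes>\<^sub>M borel)).
                (\<Sum>n<r0. ln \<bar>snd (f (- int n, lt b n))\<bar>) \<notin> lattice \<delta>} \<in> sets (Pi\<^sub>M UNIV (\<lambda>_. borel \<Otimes>\<^sub>M borel))"
              by measurable
          qed
          have s2: "H \<in> sigma_sets (space P) {(\<lambda>\<omega>. (\<lambda>n. Y n \<omega>, \<lambda>n. eta n \<omega>)) -` S \<inter> space P | S. S \<in>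
                 sets ((Pi\<^sub>M UNIV (\<lambda>_. count_space UNIV)) \<Otimes>\<^sub>M (Pi\<^sub>M UNIV (\<lambda>_. count_space UNIV)))}"
          proof (rule sigma_sets.Basic, intro CollectI exI conjI)
            show "H = (\<lambda>\<omega>. (\<lambda>n. Y n \<omega>, \<lambda>n. eta n \<omega>)) -` {x \<in> space ((Pi\<^sub>M UNIV (\<lambda>_. count_space UNIV)) \<Otimes>\<^sub>M (Pi\<^sub>M UNIV (\<lambda>_. count_space UNIV))).
                (\<forall>j<Suc r0. fst x (- int r0 + int j) = ws b ! j) \<and> snd x (int r0)} \<inter> space P"
              unfolding H_def Path_eq by (auto simp: space_PiM space_pair_measure)
            show "{x \<in> space ((Pi\<^sub>M UNIV (\<lambda>_. count_space UNIV)) \<Otimes>\<^sub>M (Pi\<^sub>M UNIV (\<lambda>_. count_space UNIV))).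
                (\<forall>j<Suc r0. fst x (- int r0 + int j) = ws b ! j) \<and> snd x (int r0)} \<in>
                sets ((Pi\<^sub>M UNIV (\<lambda>_. count_space UNIV)) \<Otimes>\<^sub>M (Pi\<^sub>M UNIV (\<lambda>_. count_space UNIV)))"
              by measurable
          qed
          show ?thesis by (rule indep_setD[OF iset s1 s2])
        qed
        have onH: "Y 0 \<omega> = ystar \<and> V \<omega> = S b \<omega>" if "\<omega> \<in> H" for \<omega>
        proof -
          from that have \<omega>s: "\<omega> \<in> space P" and pth: "\<And>j. j < Suc r0 \<Longrightarrow> Y (- int r0 + int j) \<omega> = ws b ! j"
            and et: "eta (int r0) \<omega>"
            unfolding H_def Path_eq by auto
          have Y0: "Y 0 \<omega> = [a]" using pth[of r0] ws_r0 by simp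
          have Yr0: "Y (- int r0) \<omega> = [a]" using pth[of 0] ws_lt[of 0 b] r0(1) by simp
          have Yn: "Y (- int n) \<omega> = a # replicate (r0 - n) b" if n: "0 < n" "n < r0" for n
          proof -
            have e: "- int r0 + int (r0 - n) = - int n" using n by simp
            have "r0 - n < Suc r0" "r0 - n < r0" using n by auto
            then show ?thesis using pth[of "r0 - n"] ws_lt[of "r0 - n" b] unfolding e by simp
          qed
          have reg: "regen1 Y eta ystar \<omega> = r0"
            unfolding regen1_def
          proof (rule Least_equality)
            show "0 < r0 \<and> Y (- int r0) \<omega> = ystar \<and> eta (int r0) \<omega>" using r0(1) Yr0 et ys by simp
          next
            fix m' assume m': "0 < m' \<and> Y (- int m') \<omega> = ystar \<and> eta (int m') \<omega>"
            show "r0 \<le> m'"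
            proof (rule ccontr)
              assume nle: "\<not> r0 \<le> m'"
              then have "Y (- int m') \<omega> = a # replicate (r0 - m') b" using Yn[of m'] m' by simp
              moreover have "r0 - m' > 0" using nle by simp
              ultimately show False using m' ys by (cases "r0 - m'") auto
            qed
          qed
          have Xn: "X (- int n) \<omega> = lt b n" if n: "n < r0" for n
          proof (cases "n = 0")
            case True then show ?thesis using X_Y[OF \<omega>s, of 0] Y0 unfolding lt_def by simp
          next
            case False
            then have "Y (- int n) \<omega> = a # replicate (r0 - n) b" using Yn n by simp
            moreover have "r0 - n > 0" using n by simp
            ultimately show ?thesis using X_Y[OF \<omega>s, of "- int n"] False unfolding lt_def by (cases "r0 - n") auto
          qed
          have "V \<omega> = S b \<omega>" unfolding V_def Vsum_def reg S_def L_def using Xn by (intro sum.cong) auto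
          then show ?thesis using Y0 ys by simp
        qed
        have FE: "G \<inter> H \<subseteq> E0" using onH Hev sets.sets_into_space unfolding E0_def by blast
        have FV: "V \<omega> \<notin> lattice \<delta>" if "\<omega> \<in> G \<inter> H" for \<omega> using onH that unfolding G_def by auto
        have "prob (G \<inter> H) = 0" using F0[OF _ FE FV] Gev Hev by blast
        then have "prob G * (prob Path * r) = 0" using probGH probH by simp
        then have "prob G = 0" using Pathpos r(1) by simp
        then have "AE \<omega> in P. \<omega> \<notin> G" using prob_eq_0[OF Gev] by simp
        then show ?thesis using AE_space unfolding G_def by eventually_elim auto
      qed
      have ind: "indep_var borel (L (- int k) (lt b k)) borel (\<lambda>\<omega>. \<Sum>n\<in>{..<r0} - {k}. L (- int n) (lt b n) \<omega>)"
        if k: "k < r0" for b k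
      proof -
        define idx where "idx n = (- int n, lt b n)" for n
        define B where "B = idx ` ({..<r0} - {k})"
        have iv: "indep_var (Pi\<^sub>M {idx k} (\<lambda>_. borel \<Otimes>\<^sub>M borel)) (\<lambda>\<omega>. restrict (\<lambda>i. (case i of (n, j) \<Rightarrow> \<lambda>\<omega>. (Qc n j \<omega>, Mc n j \<omega>)) \<omega>) {idx k})
            (Pi\<^sub>M B (\<lambda>_. borel \<Otimes>\<^sub>M borel)) (\<lambda>\<omega>. restrict (\<lambda>i. (case i of (n, j) \<Rightarrow> \<lambda>\<omega>. (Qc n j \<omega>, Mc n j \<omega>)) \<omega>) B)"
          by (rule indep_var_restrict[OF coef_indep]) (auto simp: idx_def B_def)
        have g: "(\<lambda>q. ln \<bar>snd q\<bar>) \<in> borel_measurable (borel \<Otimes>\<^sub>M borel :: (real \<times> real) measure)" by measurable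
        have m1: "(\<lambda>f::(int \<times> 'd) \<Rightarrow> real \<times> real. ln \<bar>snd (f (idx k))\<bar>) \<in> borel_measurable (Pi\<^sub>M {idx k} (\<lambda>_. borel \<Otimes>\<^sub>M borel))"
          using measurable_compose[OF measurable_component_singleton[of "idx k" "{idx k}" "\<lambda>_. borel \<Otimes>\<^sub>M borel"] g] by simp
        have m2: "(\<lambda>f::(int \<times> 'd) \<Rightarrow> real \<times> real. \<Sum>n\<in>{..<r0} - {k}. ln \<bar>snd (f (idx n))\<bar>) \<in> borel_measurable (Pi\<^sub>M B (\<lambda>_. borel \<Otimes>\<^sub>M borel))"
        proof (rule borel_measurable_sum)
          fix n assume "n \<in> {..<r0} - {k}"
          then have "idx n \<in> B" unfolding B_def by blast
          from measurable_compose[OF measurable_component_singleton[where M="\<lambda>_. borel \<Otimes>\<^sub>M borel", OF this] g]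
          show "(\<lambda>f::(int \<times> 'd) \<Rightarrow> real \<times> real. ln \<bar>snd (f (idx n))\<bar>) \<in> borel_measurable (Pi\<^sub>M B (\<lambda>_. borel \<Otimes>\<^sub>M borel))" by simp
        qed
        have c: "indep_var borel ((\<lambda>f::(int \<times> 'd) \<Rightarrow> real \<times> real. ln \<bar>snd (f (idx k))\<bar>) \<circ> (\<lambda>\<omega>. restrict (\<lambda>i. (case i of (n, j) \<Rightarrow> \<lambda>\<omega>. (Qc n j \<omega>, Mc n j \<omega>)) \<omega>) {idx k}))
            borel ((\<lambda>f::(int \<times> 'd) \<Rightarrow> real \<times> real. \<Sum>n\<in>{..<r0} - {k}. ln \<bar>snd (f (idx n))\<bar>) \<circ> (\<lambda>\<omega>. restrict (\<lambda>i. (case i of (n, j) \<Rightarrow> \<lambda>\<omega>. (Qc n j \<omega>, Mc n j \<omega>)) \<omega>) B))"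
          by (rule indep_var_compose[OF iv m1 m2])
        have e1: "(\<lambda>f::(int \<times> 'd) \<Rightarrow> real \<times> real. ln \<bar>snd (f (idx k))\<bar>) \<circ> (\<lambda>\<omega>. restrict (\<lambda>i. (case i of (n, j) \<Rightarrow> \<lambda>\<omega>. (Qc n j \<omega>, Mc n j \<omega>)) \<omega>) {idx k})
            = L (- int k) (lt b k)"
          by (auto simp: fun_eq_iff idx_def L_def)
        have e2: "(\<lambda>f::(int \<times> 'd) \<Rightarrow> real \<times> real. \<Sum>n\<in>{..<r0} - {k}. ln \<bar>snd (f (idx n))\<bar>) \<circ> (\<lambda>\<omega>. restrict (\<lambda>i. (case i of (n, j) \<Rightarrow> \<lambda>\<omega>. (Qc n j \<omega>, Mc n j \<omega>)) \<omega>) B)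
            = (\<lambda>\<omega>. \<Sum>n\<in>{..<r0} - {k}. L (- int n) (lt b n) \<omega>)"
          unfolding o_def by (intro HOL.ext sum.cong refl) (auto simp: idx_def L_def B_def)
        show ?thesis using c unfolding e1 e2 .
      qed
      have transfer: "(AE \<omega> in P. L n i \<omega> - t \<in> lattice \<delta>) \<longleftrightarrow> (AE \<omega> in P. L n' i \<omega> - t \<in> lattice \<delta>)" for n n' i t
      proof -
        have sx: "{x \<in> space (borel \<Otimes>\<^sub>M borel). ln \<bar>snd x\<bar> - t \<in> lattice \<delta>} \<in> sets (borel \<Otimes>\<^sub>M borel :: (real \<times> real) measure)"
          by measurable
        have *: "(AE \<omega> in P. L n i \<omega> - t \<in> lattice \<delta>) \<longleftrightarrow>
            (AE x in distr P (borel \<Otimes>\<^sub>M borel) (\<lambda>\<omega>. (Qc n i \<omega>, Mc n i \<omega>)). ln \<bar>snd x\<bar> - t \<in> lattice \<delta>)" for n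
          using AE_distr_iff[OF QMmeas sx] by (simp add: L_def)
        show ?thesis unfolding * coef_ident[of n i] coef_ident[of n' i] ..
      qed
      have "\<exists>t. AE \<omega> in P. L (-1) c \<omega> - t \<in> lattice \<delta>" for c
      proof -
        have one: "1 < r0" using r0ge2 by simp
        have i1: "indep_var borel (L (- int 1) (lt c 1)) borel (\<lambda>\<omega>. \<Sum>n\<in>{..<r0} - {1}. L (- int n) (lt c n) \<omega>)"
          by (rule ind[OF one])
        have "AE \<omega> in P. L (- int 1) (lt c 1) \<omega> + (\<Sum>n\<in>{..<r0} - {1}. L (- int n) (lt c n) \<omega>) \<in> lattice \<delta>"
          using AES[of c]
        proof eventually_elim
          case (elim \<omega>)
          have "S c \<omega> = L (- int 1) (lt c 1) \<omega> + (\<Sum>n\<in>{..<r0} - {1}. L (- int n) (lt c n) \<omega>)"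
            unfolding S_def by (rule sum.remove) (use one in auto)
          then show ?case using elim by simp
        qed
        from coset_const[OF i1 \<delta> this] show ?thesis unfolding lt_def by simp
      qed
      then obtain T where T: "\<And>c. AE \<omega> in P. L (-1) c \<omega> - T c \<in> lattice \<delta>" by metis
      have Tall: "AE \<omega> in P. L n c \<omega> - T c \<in> lattice \<delta>" for n c
        using T[of c] transfer[of "-1" c "T c" n] by simp
      have sumT: "(\<Sum>n<r0. T (lt c n)) \<in> lattice \<delta>" for c
      proof -
        have "AE \<omega> in P. S c \<omega> \<in> lattice \<delta> \<and> (\<forall>n. L (- int n) (lt c n) \<omega> - T (lt c n) \<in> lattice \<delta>)"
          using AES[of c] Tall by (simp add: AE_all_countable AE_conj_iff)
        from AE_ex[OF this] obtain \<omega> where \<omega>: "S c \<omega> \<in> lattice \<delta>" "\<forall>n. L (- int n) (lt c n) \<omega> - T (lt c n) \<in> lattice \<delta>"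
          by blast
        have "(\<Sum>n<r0. L (- int n) (lt c n) \<omega> - T (lt c n)) \<in> lattice \<delta>"
          by (rule lattice_sum) (use \<omega>(2) in auto)
        then have d: "S c \<omega> - (\<Sum>n<r0. T (lt c n)) \<in> lattice \<delta>" unfolding S_def by (simp add: sum_subtractf)
        have "S c \<omega> - (S c \<omega> - (\<Sum>n<r0. T (lt c n))) \<in> lattice \<delta>" by (rule lattice_diff[OF \<omega>(1) d])
        then show ?thesis by simp
      qed
      obtain m where m: "r0 = Suc m" using r0(1) by (cases r0) auto
      have sumform: "(\<Sum>n<r0. T (lt c n)) = T a + of_nat m * T c" for c
        unfolding m sum.lessThan_Suc_shift by (simp add: lt_def)
      have ta: "of_nat (Suc m) * T a \<in> lattice \<delta>"
      proof -
        have "of_nat (Suc m) * T a = T a + of_nat m * T a" by (simp add: algebra_simps)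
        then show ?thesis using sumT[of a] sumform[of a] by simp
      qed
      have tc: "of_nat (Suc m * m) * T c \<in> lattice \<delta>" for c
      proof -
        have h1: "of_int (int (Suc m)) * (T a + of_nat m * T c) \<in> lattice \<delta>"
          using lattice_mult_int[OF sumT[of c], of "int (Suc m)"] unfolding sumform[of c] .
        have h2: "of_nat (Suc m) * T a \<in> lattice \<delta>" by (rule ta)
        have "of_int (int (Suc m)) * (T a + of_nat m * T c) - of_nat (Suc m) * T a
            = of_nat (Suc m * m) * T c" by (simp only: of_int_of_nat_eq of_nat_mult of_nat_Suc of_int_add of_int_1) (simp add: algebra_simps)
        then show ?thesis using lattice_diff[OF h1 h2] by simp
      qed
      have Kpos: "Suc m * m > 0" using r0ge2 m by simp
      define \<delta>' where "\<delta>' = \<delta> / of_nat (Suc m * m)"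
      have \<delta>'pos: "\<delta>' > 0" unfolding \<delta>'_def using \<delta> Kpos by (intro divide_pos_pos) (simp_all only: of_nat_0_less_iff)
      have L0: "AE \<omega> in P. \<forall>c. L 0 c \<omega> \<in> lattice \<delta>'"
      proof (subst AE_all_countable, intro allI)
        fix c
        show "AE \<omega> in P. L 0 c \<omega> \<in> lattice \<delta>'"
          using Tall[of 0 c]
        proof eventually_elim
          case (elim \<omega>)
          have "of_int (int (Suc m * m)) * (L 0 c \<omega> - T c) \<in> lattice \<delta>" by (rule lattice_mult_int[OF elim])
          from lattice_add[OF this tc[of c]] have "of_nat (Suc m * m) * L 0 c \<omega> \<in> lattice \<delta>"
            by (simp add: algebra_simps)
          then show ?case unfolding \<delta>'_def by (rule lattice_div) (rule Kpos)
        qed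
      qed
      have MX[measurable]: "(\<lambda>\<omega>. Mc 0 (X 0 \<omega>) \<omega>) \<in> borel_measurable P"
        by (rule measurable_compose_countable[OF _ X0meas], rule Mmeas)
      have aeX: "AE \<omega> in P. ln \<bar>Mc 0 (X 0 \<omega>) \<omega>\<bar> \<in> lattice \<delta>' \<and> Mc 0 (X 0 \<omega>) \<omega> \<noteq> 0"
        using L0 hyp_i
      proof eventually_elim
        case (elim \<omega>)
        have "0 < m0" using elim(2) abs_ge_zero[of "Mc 0 (X 0 \<omega>) \<omega>"] by linarith
        then have "0 < inverse m0" by simp
        then have "Mc 0 (X 0 \<omega>) \<omega> \<noteq> 0" using elim(2) by auto
        then show ?case using elim(1) unfolding L_def by simp
      qed
      have ev1: "{\<omega>\<in>space P. ln \<bar>Mc 0 (X 0 \<omega>) \<omega>\<bar> \<in> lattice \<delta>' \<and> Mc 0 (X 0 \<omega>) \<omega> \<noteq> 0} \<in> events"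
        by measurable
      have ev2: "{\<omega>\<in>space P. Mc 0 (X 0 \<omega>) \<omega> \<noteq> 0} \<in> events" by measurable
      have p1: "\<P>(\<omega> in P. ln \<bar>Mc 0 (X 0 \<omega>) \<omega>\<bar> \<in> lattice \<delta>' \<and> Mc 0 (X 0 \<omega>) \<omega> \<noteq> 0) = 1"
        using aeX prob_Collect_eq_1[OF ev1] by simp
      have "AE \<omega> in P. Mc 0 (X 0 \<omega>) \<omega> \<noteq> 0" using aeX by eventually_elim simp
      then have p2: "\<P>(\<omega> in P. Mc 0 (X 0 \<omega>) \<omega> \<noteq> 0) = 1" using prob_Collect_eq_1[OF ev2] by simp
      have "\<P>(\<omega> in P. ln \<bar>Mc 0 (X 0 \<omega>) \<omega>\<bar> \<in> lattice \<delta>' \<bar> Mc 0 (X 0 \<omega>) \<omega> \<noteq> 0) = 1"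
        unfolding cond_prob_def p1 p2 by simp
      with hyp_iii[OF \<delta>'pos] show False by simp
    qed
  qed
qed

end
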